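(* Let $f:[0,1]\to[0,1]$ be continuous and strictly increasing with $f(0)=0$, $f(1)=1$, and $f(y)=e$ for some $y,e\in\,]0,1[$ with $y>e$; put $x=f(e)$ (so $x<e$). Let $a=\lim_{n\to+\infty}f^{(n)}(x)$ and $d=\lim_{n\to+\infty}f^{(-n)}(x)$. Let $F:[x,e]^2\to[f(x),e]$ be commutative and non-decreasing with $F(s,e)=s$ and $F(s,x)=f(s)$ for all $s\in[x,e]$, and such that for all $s,t,u\in\,]x,e]$ with $F(s,t)\in\,]f^{(n+1)}(e),f^{(n)}(e)]$ and $F(t,u)\in\,]f^{(m+1)}(e),f^{(m)}(e)]$, $n,m\in\{0,1\}$, $$f^{(m)}\big(F(s,f^{(-m)}(F(t,u)))\big)=f^{(n)}\big(F(f^{(-n)}(F(s,t)),u)\big).$$ Then the function $U:]a,d[^2\to\,]a,d[$ given by $$U(s,t)=f^{(n+m)}\big(F(f^{(-n)}(s),f^{(-m)}(t))\big)\quad\text{if }s\in\,]f^{(n+1)}(e),f^{(n)}(e)],\ t\in\,]f^{(m+1)}(e),f^{(m)}(e)],\ n,m\in\mathbb{Z},$$ is well defined and is a uninorm on $]a,d[$, i.e., it is commutative, associative, non-decreasing in each variable, and $e$ is its neutral element.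
   Context: For a continuous strictly increasing bijection $f:[0,1]\to[0,1]$: $f^{(0)}=\mathrm{id}$, $f^{(n)}=f\circ f^{(n-1)}$ and $f^{(-n)}=f^{-1}\circ f^{(-n+1)}$ for $n\in\mathbb{N}$, where $f^{-1}$ is the inverse function of $f$. *)

theory Defs
  imports "HOL-Analysis.Analysis"
begin

definition fiter :: "(real \<Rightarrow> real) \<Rightarrow> int \<Rightarrow> real \<Rightarrow> real" where
  "fiter f n = (if 0 \<le> n then f ^^ nat n else inv_into {0..1} f ^^ nat (- n))"

definition lvl :: "(real \<Rightarrow> real) \<Rightarrow> real \<Rightarrow> real \<Rightarrow> int" where
  "lvl f e s = (THE n::int. fiter f (n + 1) e < s \<and> s \<le> fiter f n e)"

definition Uext :: "(real \<Rightarrow> real) \<Rightarrow> (real \<Rightarrow> real \<Rightarrow> real) \<Rightarrow> real \<Rightarrow> real \<Rightarrow> real \<Rightarrow> real" where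
  "Uext f F e s t = fiter f (lvl f e s + lvl f e t)
      (F (fiter f (- lvl f e s) s) (fiter f (- lvl f e t) t))"

definition uninorm_on :: "real set \<Rightarrow> (real \<Rightarrow> real \<Rightarrow> real) \<Rightarrow> real \<Rightarrow> bool" where
  "uninorm_on I U e \<longleftrightarrow> e \<in> I \<and>
     (\<forall>s\<in>I. \<forall>t\<in>I. U s t \<in> I) \<and>
     (\<forall>s\<in>I. \<forall>t\<in>I. U s t = U t s) \<and>
     (\<forall>s\<in>I. \<forall>t\<in>I. \<forall>u\<in>I. U s (U t u) = U (U s t) u) \<and>
     (\<forall>s\<in>I. \<forall>s'\<in>I. \<forall>t\<in>I. s \<le> s' \<longrightarrow> U s t \<le> U s' t) \<and>
     (\<forall>s\<in>I. \<forall>t\<in>I. \<forall>t'\<in>I. t \<le> t' \<longrightarrow> U s t \<le> U s t') \<and>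
     (\<forall>s\<in>I. U s e = s)"

end

theory Submission
  imports Defs
begin


locale fb =
  fixes f :: "real \<Rightarrow> real"
  assumes fmono: "strict_mono_on {0..1} f" and fbij: "bij_betw f {0..1} {0..1}"
begin

definition g where "g = inv_into {0..1} f"

lemma f_in: "z \<in> {0..1} \<Longrightarrow> f z \<in> {0..1}"
  using fbij bij_betwE by blast

lemma g_in: "z \<in> {0..1} \<Longrightarrow> g z \<in> {0..1}"
  unfolding g_def using bij_betw_inv_into[OF fbij] bij_betwE by blast

lemma g_f: "z \<in> {0..1} \<Longrightarrow> g (f z) = z"
  unfolding g_def using bij_betw_imp_inj_on[OF fbij] by (simp add: inv_into_f_f)

lemma f_g: "z \<in> {0..1} \<Longrightarrow> f (g z) = z"
  unfolding g_def using bij_betw_imp_surj_on[OF fbij] by (simp add: f_inv_into_f)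

lemma funpow_in: fixes h :: "real \<Rightarrow> real" assumes "\<And>z. z \<in> {0..1} \<Longrightarrow> h z \<in> {0..1::real}"
  shows "z \<in> {0..1} \<Longrightarrow> (h ^^ k) z \<in> {0..1}"
proof (induction k)
  case 0 then show ?case by (simp add: funpow.simps)
next
  case (Suc k) then show ?case using assms[of "(h ^^ k) z"] by simp
qed

lemma fiter_in: "z \<in> {0..1} \<Longrightarrow> fiter f n z \<in> {0..1}"
  unfolding fiter_def using funpow_in[of f] funpow_in[of "inv_into {0..1} f"] f_in g_in
  unfolding g_def by auto

lemma fiter_0: "fiter f 0 z = z" by (simp add: fiter_def)
lemma fiter_1: "fiter f 1 z = f z" by (simp add: fiter_def)

lemma fiter_succ: assumes z: "z \<in> {0..1}" shows "fiter f (n+1) z = f (fiter f n z)"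
proof (cases "0 \<le> n")
  case True
  then have "nat (n+1) = Suc (nat n)" by simp
  then show ?thesis using True by (simp add: fiter_def)
next
  case False
  have h1: "fiter f (n+1) z = (g ^^ nat (-(n+1))) z"
    using False by (cases "n+1 = 0") (auto simp: fiter_def g_def)
  have "nat (-n) = Suc (nat (-(n+1)))" using False by simp
  then have h2: "fiter f n z = g ((g ^^ nat (-(n+1))) z)"
    using False by (simp add: fiter_def g_def)
  have "(g ^^ nat (-(n+1))) z \<in> {0..1}" using funpow_in[of g] g_in z by blast
  then show ?thesis using h1 h2 f_g by simp
qed

lemma fiter_pred: assumes z: "z \<in> {0..1}" shows "fiter f (n-1) z = g (fiter f n z)"
  using fiter_succ[OF z, of "n-1"] g_f fiter_in[OF z] by simp

lemma fiter_add: assumes z: "z \<in> {0..1}" shows "fiter f (m+n) z = fiter f m (fiter f n z)"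
proof (induction m rule: int_induct[where k=0])
  case base
  then show ?case by (simp add: fiter_0)
next
  case (step1 i)
  have "fiter f (i+1+n) z = fiter f ((i+n)+1) z" by (simp add: algebra_simps)
  also have "\<dots> = f (fiter f (i+n) z)" using fiter_succ z by blast
  also have "\<dots> = fiter f (i+1) (fiter f n z)" using step1 fiter_succ fiter_in z by simp
  finally show ?case .
next
  case (step2 i)
  have "fiter f (i-1+n) z = fiter f ((i+n)-1) z" by (simp add: algebra_simps)
  also have "\<dots> = g (fiter f (i+n) z)" using fiter_pred z by blast
  also have "\<dots> = fiter f (i-1) (fiter f n z)" using step2 fiter_pred fiter_in z by simp
  finally show ?case .
qed

lemma g_less: assumes "z \<in> {0..1}" "w \<in> {0..1}" "z < w" shows "g z < g w"
proof (rule ccontr)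
  assume "\<not> g z < g w"
  then have "g w < g z \<or> g w = g z" by auto
  then have "f (g w) \<le> f (g z)"
  proof
    assume "g w < g z"
    then show ?thesis using strict_mono_onD[OF fmono, of "g w" "g z"] g_in[OF assms(1)] g_in[OF assms(2)] by simp
  qed simp
  then show False using f_g assms by simp
qed

lemma fiter_less: assumes "z \<in> {0..1}" "w \<in> {0..1}" "z < w" shows "fiter f n z < fiter f n w"
proof (induction n rule: int_induct[where k=0])
  case base
  then show ?case using assms by (simp add: fiter_0)
next
  case (step1 i)
  then show ?case using fiter_succ assms fiter_in strict_mono_onD[OF fmono] by simp
next
  case (step2 i)
  then show ?case using fiter_pred assms fiter_in g_less by simp
qed

lemma fiter_less_iff: assumes "z \<in> {0..1}" "w \<in> {0..1}" shows "fiter f n z < fiter f n w \<longleftrightarrow> z < w"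
  using fiter_less[OF assms] fiter_less[OF assms(2,1)] by (metis less_asym linorder_neqE_linordered_idom)

lemma fiter_le_iff: assumes "z \<in> {0..1}" "w \<in> {0..1}" shows "fiter f n z \<le> fiter f n w \<longleftrightarrow> z \<le> w"
  using fiter_less_iff[OF assms(2,1)] by (simp add: not_less[symmetric])

end


locale mf = fb f for f :: "real \<Rightarrow> real" +
  fixes F :: "real \<Rightarrow> real \<Rightarrow> real" and y e x a d :: real
  assumes f0: "f 0 = 0" and f1: "f 1 = 1"
    and y_in: "y \<in> {0<..<1}" and e_in: "e \<in> {0<..<1}"
    and ye: "y > e" and fy: "f y = e"
    and x_def: "x = f e"
    and a_lim: "(\<lambda>n. fiter f (int n) x) \<longlonglongrightarrow> a"
    and d_lim: "(\<lambda>n. fiter f (- int n) x) \<longlonglongrightarrow> d"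
    and F_range: "\<forall>s\<in>{x..e}. \<forall>t\<in>{x..e}. F s t \<in> {f x..e}"
    and F_comm: "\<forall>s\<in>{x..e}. \<forall>t\<in>{x..e}. F s t = F t s"
    and F_mono1: "\<forall>s\<in>{x..e}. \<forall>s'\<in>{x..e}. \<forall>t\<in>{x..e}. s \<le> s' \<longrightarrow> F s t \<le> F s' t"
    and F_e: "\<forall>s\<in>{x..e}. F s e = s"
    and F_x: "\<forall>s\<in>{x..e}. F s x = f s"
    and F_assoc: "\<forall>s\<in>{x<..e}. \<forall>t\<in>{x<..e}. \<forall>u\<in>{x<..e}. \<forall>n\<in>{0::int,1}. \<forall>m\<in>{0::int,1}.
        F s t \<in> {fiter f (n + 1) e<..fiter f n e} \<longrightarrow>
        F t u \<in> {fiter f (m + 1) e<..fiter f m e} \<longrightarrow>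
        fiter f m (F s (fiter f (- m) (F t u))) = fiter f n (F (fiter f (- n) (F s t)) u)"
begin

abbreviation E where "E k \<equiv> fiter f k e"

lemma e01: "e \<in> {0..1}" using e_in by auto
lemma x01: "x \<in> {0..1}" using f_in e01 x_def by auto
lemma E01: "E k \<in> {0..1}" using fiter_in e01 by blast

lemma x_lt_e: "x < e"
  using strict_mono_onD[OF fmono, of e y] e_in y_in ye fy x_def by auto

lemma E1: "E 1 = x" using x_def fiter_1 by simp
lemma E0: "E 0 = e" using fiter_0 by simp

lemma fiter_x: "fiter f k x = E (k+1)"
  using fiter_add[OF e01, of k 1] E1 by simp

lemma E2: "E 2 = f x" using fiter_x[of 1] fiter_1 by simp

lemma E_step: "E (k+1) < E k"
  using fiter_x[of k] fiter_less[OF x01 e01 x_lt_e, of k] by simp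

lemma E_less_aux: "E (k + 1 + int j) < E k"
proof (induction j)
  case 0 then show ?case using E_step by simp
next
  case (Suc j)
  have "E (k + 1 + int (Suc j)) = E ((k + 1 + int j) + 1)" by (simp add: algebra_simps)
  then show ?case using E_step[of "k + 1 + int j"] Suc by simp
qed

lemma E_less: "k < l \<Longrightarrow> E l < E k"
  using E_less_aux[of k "nat (l - k - 1)"] by simp

lemma E_less_iff: "E l < E k \<longleftrightarrow> k < l"
  using E_less by (metis less_asym linorder_neqE_linordered_idom)

lemma E_le_iff: "E l \<le> E k \<longleftrightarrow> k \<le> l"
  using E_less_iff[of k l] by (simp add: not_less[symmetric])

lemma a_lim': "(\<lambda>n. E (int n + 1)) \<longlonglongrightarrow> a" using a_lim fiter_x by simp
lemma d_lim': "(\<lambda>n. E (- int n + 1)) \<longlonglongrightarrow> d" using d_lim fiter_x by simp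

lemma a_lt: "a < E k"
proof -
  have "decseq (\<lambda>n. E (int n + 1))"
    unfolding decseq_def using E_le_iff by simp
  then have "a \<le> E (int (nat k + 1) + 1)" using decseq_ge a_lim' by blast
  also have "\<dots> < E k" using E_less by simp
  finally show ?thesis .
qed

lemma d_gt: "E k < d"
proof -
  have "incseq (\<lambda>n. E (- int n + 1))"
    unfolding incseq_def using E_le_iff by simp
  then have "E (- int (nat (-k) + 2) + 1) \<le> d" using incseq_le d_lim' by blast
  moreover have "E k < E (- int (nat (-k) + 2) + 1)" using E_less by simp
  ultimately show ?thesis by simp
qed

lemma a_ge0: "0 \<le> a"
  using LIMSEQ_le_const[OF a_lim'] E01 by auto
lemma d_le1: "d \<le> 1"
  using LIMSEQ_le_const2[OF d_lim'] E01 by auto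

lemma lvl_unique: "E (n+1) < s \<and> s \<le> E n \<Longrightarrow> E (m+1) < s \<and> s \<le> E m \<Longrightarrow> n = m"
proof (rule ccontr)
  assume h: "E (n+1) < s \<and> s \<le> E n" "E (m+1) < s \<and> s \<le> E m" "n \<noteq> m"
  show False
  proof (cases "n < m")
    case True
    then have "E m \<le> E (n+1)" using E_le_iff by simp
    then show False using h by simp
  next
    case False
    then have "E n \<le> E (m+1)" using E_le_iff h(3) by simp
    then show False using h by simp
  qed
qed

lemma lvl_ex: assumes s: "s \<in> {a<..<d}" shows "\<exists>n. E (n+1) < s \<and> s \<le> E n"
proof -
  have "\<forall>\<^sub>F n in sequentially. E (int n + 1) < s"
    using order_tendstoD(2)[OF a_lim'] s by auto
  then obtain N where N: "E (int N + 1) < s" by (auto simp: eventually_sequentially)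
  have "\<forall>\<^sub>F n in sequentially. E (- int n + 1) > s"
    using order_tendstoD(1)[OF d_lim'] s by auto
  then obtain M where M: "E (- int M + 1) > s" by (auto simp: eventually_sequentially)
  define k1 where "k1 = - int M + 1"
  define k0 where "k0 = int N + 1"
  have "k1 < k0" using N M E_le_iff unfolding k0_def k1_def by (meson linorder_not_le order.strict_trans)
  define P where "P j = (E (k1 + int j) < s)" for j
  have "P (nat (k0 - k1))" using N \<open>k1 < k0\<close> unfolding P_def k0_def by simp
  then have Pl: "P (LEAST j. P j)" by (rule LeastI)
  have np0: "\<not> P 0" using M unfolding P_def k1_def by simp
  have "(LEAST j. P j) \<noteq> 0"
  proof
    assume "(LEAST j. P j) = 0"
    with Pl have "P 0" by simp
    with np0 show False by simp
  qed
  then obtain j where j: "(LEAST j. P j) = Suc j" using not0_implies_Suc by blast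
  then have "\<not> P j" using not_less_Least[of j P] by simp
  then have "s \<le> E (k1 + int j)" unfolding P_def by simp
  moreover have "E (k1 + int j + 1) < s" using Pl j unfolding P_def by (simp add: algebra_simps)
  ultimately show ?thesis by blast
qed

lemma ex1_lvl: "s \<in> {a<..<d} \<Longrightarrow> \<exists>!n. E (n+1) < s \<and> s \<le> E n"
  using lvl_ex lvl_unique by blast

abbreviation L where "L s \<equiv> lvl f e s"
definition r where "r s = fiter f (- L s) s"

lemma lvl_eq: "E (k+1) < s \<Longrightarrow> s \<le> E k \<Longrightarrow> L s = k"
  unfolding lvl_def by (rule the1_equality) (use lvl_unique in blast)+

lemma lvl_prop: "s \<in> {a<..<d} \<Longrightarrow> E (L s + 1) < s \<and> s \<le> E (L s)"
  unfolding lvl_def by (rule theI') (rule ex1_lvl)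

lemma ad01: "s \<in> {a<..<d} \<Longrightarrow> s \<in> {0..1}" using a_ge0 d_le1 by auto

lemma r_in: assumes s: "s \<in> {a<..<d}" shows "r s \<in> {x<..e}" "fiter f (L s) (r s) = s"
proof -
  have s01: "s \<in> {0..1}" using ad01 s .
  have "fiter f (- L s) (E (L s + 1)) = x"
    using fiter_add[OF e01, of "- L s" "L s + 1", symmetric] E1 by simp
  moreover have "fiter f (- L s) (E (L s)) = e"
    using fiter_add[OF e01, of "- L s" "L s", symmetric] E0 by simp
  ultimately show "r s \<in> {x<..e}"
    using lvl_prop[OF s] fiter_less_iff[OF E01 s01] fiter_le_iff[OF s01 E01] unfolding r_def
    by (metis greaterThanAtMost_iff)
  show "fiter f (L s) (r s) = s"
    unfolding r_def using fiter_add[OF s01, of "L s" "- L s", symmetric] fiter_0 by simp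
qed

lemma xe01: "w \<in> {x<..e} \<Longrightarrow> w \<in> {0..1}" using x01 e01 by auto

lemma char: assumes w: "w \<in> {x<..e}" and s: "s = fiter f k w"
  shows "s \<in> {a<..<d}" "L s = k" "r s = w"
proof -
  have w01: "w \<in> {0..1}" using xe01 w .
  have 1: "E (k+1) < s" using s fiter_x[of k] fiter_less[OF x01 w01, of k] w by simp
  have 2: "s \<le> E k" using s fiter_le_iff[OF w01 e01, of k] w by simp
  show "s \<in> {a<..<d}" using 1 2 a_lt[of "k+1"] d_gt[of k] by simp
  show "L s = k" using lvl_eq 1 2 .
  then show "r s = w" unfolding r_def using s fiter_add[OF w01, of "-k" k, symmetric] fiter_0 by simp
qed

end


context mf begin

abbreviation U where "U \<equiv> Uext f F e"

lemma U_eq: "U s t = fiter f (L s + L t) (F (r s) (r t))"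
  by (simp add: Uext_def r_def)

lemma F01: assumes "p \<in> {x..e}" "q \<in> {x..e}" shows "F p q \<in> {0..1}"
proof -
  have "F p q \<in> {f x..e}" using F_range assms by blast
  then show ?thesis using f_in[OF x01] e01 by auto
qed

lemma F_rng: assumes p: "p \<in> {x<..e}" and q: "q \<in> {x<..e}" shows "F p q \<in> {E 2<..E 0}"
proof -
  have "F p q \<le> e" using F_range p q by fastforce
  moreover have "F x q \<le> F p q" using F_mono1 p q x_lt_e by fastforce
  moreover have "F x q = f q" using F_comm F_x q x_lt_e by fastforce
  moreover have "f x < f q" using strict_mono_onD[OF fmono x01 xe01[OF q]] q by simp
  ultimately show ?thesis using E2 E0 by simp
qed

lemma v_lev: assumes v: "v \<in> {E 2<..E 0}" shows "v \<in> {a<..<d}" "L v \<in> {0,1}"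
proof -
  show vI: "v \<in> {a<..<d}" using v a_lt[of 2] d_gt[of 0] by auto
  have "E (L v + 1) < E 0" "E 2 < E (L v)" using lvl_prop[OF vI] v by auto
  then have "0 < L v + 1" "L v < 2" using E_less_iff by auto
  then show "L v \<in> {0,1}" by auto
qed

lemma U_form: assumes s: "s \<in> {a<..<d}" and t: "t \<in> {a<..<d}"
  defines "v \<equiv> F (r s) (r t)"
  shows "U s t \<in> {a<..<d}" "L (U s t) = L s + L t + L v" "r (U s t) = r v"
proof -
  have v: "v \<in> {E 2<..E 0}" unfolding v_def using F_rng r_in s t by blast
  have vI: "v \<in> {a<..<d}" using v_lev[OF v] by blast
  have "U s t = fiter f (L s + L t) (fiter f (L v) (r v))"
    using U_eq r_in(2)[OF vI] unfolding v_def by simp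
  also have "\<dots> = fiter f (L s + L t + L v) (r v)"
    using fiter_add[OF xe01[OF r_in(1)[OF vI]]] by simp
  finally have eq: "U s t = fiter f (L s + L t + L v) (r v)" .
  show "U s t \<in> {a<..<d}" "L (U s t) = L s + L t + L v" "r (U s t) = r v"
    using char[OF r_in(1)[OF vI] eq] by auto
qed

lemma fiter_shift: assumes w: "w \<in> {x<..e}" and "l \<le> k" shows "fiter f k w \<le> fiter f l w"
proof (cases "l = k")
  case True then show ?thesis by simp
next
  case False
  then have "l + 1 \<le> k" using assms by simp
  have w01: "w \<in> {0..1}" using xe01 w .
  have "fiter f k w \<le> E k" using fiter_le_iff[OF w01 e01] w by simp
  also have "\<dots> \<le> E (l+1)" using E_le_iff \<open>l + 1 \<le> k\<close> by simp
  also have "\<dots> = fiter f l x" using fiter_x by simp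
  also have "\<dots> < fiter f l w" using fiter_less_iff[OF x01 w01] w by simp
  finally show ?thesis by simp
qed

lemma rxe: assumes "s \<in> {a<..<d}" shows "r s \<in> {x..e}"
proof -
  have "r s \<in> {x<..e}" using r_in(1)[OF assms] .
  then show ?thesis by auto
qed

lemma U_comm: "s \<in> {a<..<d} \<Longrightarrow> t \<in> {a<..<d} \<Longrightarrow> U s t = U t s"
  using U_eq F_comm rxe by (simp add: add.commute)

lemma U_mono1: assumes s: "s \<in> {a<..<d}" and s': "s' \<in> {a<..<d}" and t: "t \<in> {a<..<d}"
  and le: "s \<le> s'" shows "U s t \<le> U s' t"
proof -
  have ls: "L s' \<le> L s"
  proof (rule ccontr)
    assume "\<not> L s' \<le> L s"
    then have "E (L s') \<le> E (L s + 1)" using E_le_iff by simp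
    then show False using lvl_prop[OF s] lvl_prop[OF s'] le by simp
  qed
  show ?thesis
  proof (cases "L s = L s'")
    case True
    have "r s \<le> r s'" unfolding r_def using True fiter_le_iff[OF ad01[OF s] ad01[OF s']] le by simp
    then have "F (r s) (r t) \<le> F (r s') (r t)" using F_mono1 rxe s s' t by blast
    then show ?thesis using U_eq True fiter_le_iff F01 rxe s s' t by simp
  next
    case False
    then have lt: "L s' + L t + 1 \<le> L s + L t" using ls by simp
    have rt: "r t \<in> {x<..e}" using r_in(1)[OF t] .
    have "U s t = fiter f (L s + L t) (F (r s) (r t))" by (rule U_eq)
    also have "\<dots> \<le> fiter f (L s + L t) (F e (r t))"
      using fiter_le_iff[OF F01 F01] F_mono1 rxe[OF s] rxe[OF t] x_lt_e by simp
    also have "F e (r t) = r t" using F_comm F_e rxe[OF t] x_lt_e by fastforce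
    also have "fiter f (L s + L t) (r t) \<le> fiter f (L s' + L t + 1) (r t)"
      using fiter_shift[OF rt lt] .
    also have "\<dots> = fiter f (L s' + L t) (f (r t))"
      using fiter_add[OF xe01[OF rt], of "L s' + L t" 1] fiter_1 by simp
    also have "f (r t) = F x (r t)" using F_comm F_x rxe[OF t] x_lt_e by fastforce
    also have "fiter f (L s' + L t) (F x (r t)) \<le> fiter f (L s' + L t) (F (r s') (r t))"
      using fiter_le_iff[OF F01 F01] F_mono1 rxe[OF s'] rxe[OF t] x_lt_e by simp
    also have "\<dots> = U s' t" using U_eq by simp
    finally show ?thesis .
  qed
qed

lemma e_I: "e \<in> {a<..<d}" "L e = 0" "r e = e"
  using char[of e e 0] x_lt_e fiter_0 by auto

lemma U_neutral: "s \<in> {a<..<d} \<Longrightarrow> U s e = s"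
  using U_eq[of s e] e_I F_e rxe r_in(2) by simp

lemma U_assoc: assumes s: "s \<in> {a<..<d}" and t: "t \<in> {a<..<d}" and u: "u \<in> {a<..<d}"
  shows "U s (U t u) = U (U s t) u"
proof -
  define vt where "vt = F (r t) (r u)"
  define vs where "vs = F (r s) (r t)"
  have vtr: "vt \<in> {E 2<..E 0}" unfolding vt_def using F_rng r_in t u by blast
  have vsr: "vs \<in> {E 2<..E 0}" unfolding vs_def using F_rng r_in s t by blast
  have vtI: "vt \<in> {a<..<d}" and j: "L vt \<in> {0,1}" using v_lev[OF vtr] by auto
  have vsI: "vs \<in> {a<..<d}" and i: "L vs \<in> {0,1}" using v_lev[OF vsr] by auto
  have Utu: "U t u \<in> {a<..<d}" "L (U t u) = L t + L u + L vt" "r (U t u) = r vt"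
    using U_form[OF t u] unfolding vt_def by auto
  have Ust: "U s t \<in> {a<..<d}" "L (U s t) = L s + L t + L vs" "r (U s t) = r vs"
    using U_form[OF s t] unfolding vs_def by auto
  have hyp: "fiter f (L vt) (F (r s) (fiter f (- L vt) vt)) = fiter f (L vs) (F (fiter f (- L vs) vs) (r u))"
    using F_assoc r_in(1)[OF s] r_in(1)[OF t] r_in(1)[OF u] i j lvl_prop[OF vsI] lvl_prop[OF vtI]
    unfolding vt_def vs_def by auto
  have w: "r vt \<in> {x..e}" "r vs \<in> {x..e}" using rxe vtI vsI by auto
  have "U s (U t u) = fiter f (L s + L t + L u + L vt) (F (r s) (r vt))"
    using U_eq[of s "U t u"] Utu by (simp add: algebra_simps)
  also have "\<dots> = fiter f (L s + L t + L u) (fiter f (L vt) (F (r s) (r vt)))"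
    using fiter_add[OF F01[OF rxe[OF s] w(1)]] by simp
  also have "\<dots> = fiter f (L s + L t + L u) (fiter f (L vs) (F (r vs) (r u)))"
    using hyp unfolding r_def by simp
  also have "\<dots> = fiter f (L s + L t + L u + L vs) (F (r vs) (r u))"
    using fiter_add[OF F01[OF w(2) rxe[OF u]]] by simp
  also have "\<dots> = U (U s t) u"
    using U_eq[of "U s t" u] Ust by (simp add: algebra_simps)
  finally show ?thesis .
qed

lemma main: "(\<forall>s\<in>{a<..<d}. \<exists>!n::int. fiter f (n + 1) e < s \<and> s \<le> fiter f n e)
         \<and> uninorm_on {a<..<d} (Uext f F e) e"
proof -
  have "\<forall>s\<in>{a<..<d}. \<forall>s'\<in>{a<..<d}. \<forall>t\<in>{a<..<d}. s \<le> s' \<longrightarrow> U s t \<le> U s' t"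
    using U_mono1 by blast
  moreover have "\<forall>s\<in>{a<..<d}. \<forall>t\<in>{a<..<d}. \<forall>t'\<in>{a<..<d}. t \<le> t' \<longrightarrow> U s t \<le> U s t'"
  proof (intro ballI impI)
    fix s t t' assume h: "s \<in> {a<..<d}" "t \<in> {a<..<d}" "t' \<in> {a<..<d}" "t \<le> t'"
    have "U t s \<le> U t' s" using U_mono1[OF h(2) h(3) h(1) h(4)] .
    then show "U s t \<le> U s t'" using U_comm[OF h(1) h(2)] U_comm[OF h(1) h(3)] by simp
  qed
  moreover have "\<forall>s\<in>{a<..<d}. \<forall>t\<in>{a<..<d}. U s t \<in> {a<..<d}"
    using U_form(1) by blast
  moreover have "\<forall>s\<in>{a<..<d}. \<forall>t\<in>{a<..<d}. U s t = U t s"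
    using U_comm by blast
  moreover have "\<forall>s\<in>{a<..<d}. \<forall>t\<in>{a<..<d}. \<forall>u\<in>{a<..<d}. U s (U t u) = U (U s t) u"
    using U_assoc by blast
  moreover have "\<forall>s\<in>{a<..<d}. U s e = s"
    using U_neutral by blast
  moreover have "\<forall>s\<in>{a<..<d}. \<exists>!n::int. fiter f (n + 1) e < s \<and> s \<le> fiter f n e"
    using ex1_lvl by blast
  ultimately show ?thesis
    unfolding uninorm_on_def using e_I(1) by blast
qed

end

theorem mainTheorem9:
  fixes f :: "real \<Rightarrow> real" and F :: "real \<Rightarrow> real \<Rightarrow> real"
    and y e x a d :: real
  assumes f_cont: "continuous_on {0..1} f"
    and f_mono: "strict_mono_on {0..1} f"
    and f_bij: "bij_betw f {0..1} {0..1}"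
    and f0: "f 0 = 0" and f1: "f 1 = 1"
    and y_in: "y \<in> {0<..<1}" and e_in: "e \<in> {0<..<1}"
    and ye: "y > e" and fy: "f y = e"
    and x_def: "x = f e"
    and a_lim: "(\<lambda>n. fiter f (int n) x) \<longlonglongrightarrow> a"
    and d_lim: "(\<lambda>n. fiter f (- int n) x) \<longlonglongrightarrow> d"
    and F_range: "\<forall>s\<in>{x..e}. \<forall>t\<in>{x..e}. F s t \<in> {f x..e}"
    and F_comm: "\<forall>s\<in>{x..e}. \<forall>t\<in>{x..e}. F s t = F t s"
    and F_mono1: "\<forall>s\<in>{x..e}. \<forall>s'\<in>{x..e}. \<forall>t\<in>{x..e}. s \<le> s' \<longrightarrow> F s t \<le> F s' t"
    and F_mono2: "\<forall>s\<in>{x..e}. \<forall>t\<in>{x..e}. \<forall>t'\<in>{x..e}. t \<le> t' \<longrightarrow> F s t \<le> F s t'"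
    and F_e: "\<forall>s\<in>{x..e}. F s e = s"
    and F_x: "\<forall>s\<in>{x..e}. F s x = f s"
    and F_assoc: "\<forall>s\<in>{x<..e}. \<forall>t\<in>{x<..e}. \<forall>u\<in>{x<..e}. \<forall>n\<in>{0::int,1}. \<forall>m\<in>{0::int,1}.
        F s t \<in> {fiter f (n + 1) e<..fiter f n e} \<longrightarrow>
        F t u \<in> {fiter f (m + 1) e<..fiter f m e} \<longrightarrow>
        fiter f m (F s (fiter f (- m) (F t u))) = fiter f n (F (fiter f (- n) (F s t)) u)"
  shows "(\<forall>s\<in>{a<..<d}. \<exists>!n::int. fiter f (n + 1) e < s \<and> s \<le> fiter f n e)
         \<and> uninorm_on {a<..<d} (Uext f F e) e"
  proof -
  have "mf f F y e x a d"
    unfolding mf_def fb_def mf_axioms_def using assms by blast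
  then interpret mf f F y e x a d .
  show ?thesis by (rule main)
qed

end
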